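(* Let $F=\{T_1,\dots,T_t\}$ be a random forest with $t\ge 1$ and, for an input $x\in\mathcal{D}$, let $L_x$ be the labelling of the explanation BAG $\mathcal{B}_F$ defined by: a feature argument $A_{X_i\in S_{i,j}}$ is $\mathrm{in}$ if $x_i\in S_{i,j}$ and $\mathrm{out}$ otherwise; a rule argument $A_{T,r}$ is $\mathrm{in}$ if $r$ is the active rule in $T$ for $x$ and $\mathrm{out}$ otherwise; a class argument is $\mathrm{in}$ if its supporters dominate its attackers, $\mathrm{out}$ if its attackers dominate its supporters, and $\mathrm{und}$ otherwise. Then (1) for every $x\in\mathcal{D}$, $L_x$ is a bi-complete labelling of $\mathcal{B}_F$; (2) there is at most one $y\in\mathcal{C}$ with $L_x(A_y)=\mathrm{in}$, and if $L_x(A_y)=\mathrm{in}$ for some $y\in\mathcal{C}$, then $L_x(A_{y'})=\mathrm{out}$ for all $y'\in\mathcal{C}\setminus\{y\}$.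
   Context: Features $X_1,\dots,X_k$ have domains $D_1,\dots,D_k$; each feature is categorical (finite domain) or numerical ($D_i\subseteq\mathbb{R}$). Inputs are $x=(x_1,\dots,x_k)\in\mathcal{D}=D_1\times\dots\times D_k$; $\mathcal{C}$ is a finite set of class labels. Feature conditions are $X_i=v$ (categorical) or $X_i\le v$ (numerical); a feature literal is a condition or its negation. A rule $r$ is $\mathrm{prem}(r)\rightarrow\mathrm{conc}(r)$ with $\mathrm{prem}(r)$ a finite set of feature literals and $\mathrm{conc}(r)\in\mathcal{C}$. A decision tree $T$ is a finite set of rules such that every input satisfies the premise of exactly one rule of $T$, the active rule in $T$ for $x$. A random forest is a finite set of decision trees. Domain partition: for a categorical feature, the singletons $\{v\}$, $v\in D_i$; for a numerical feature with distinct thresholds $v_1<\dots<v_m$ occurring in conditions $X_i\le v$ in $F$, the sets $D_i\cap(-\infty,v_1]$, $D_i\cap(v_{j-1},v_j]$ ($2\le j\le m$), $D_i\cap(v_m,\infty)$; denote them $S_{i,1},\dots,S_{i,n_i}$. A BAG is $(\mathcal{A},\mathrm{Att},\mathrm{Sup})$ with $\mathcal{A}$ finite and $\mathrm{Att},\mathrm{Sup}\subseteq\mathcal{A}\times\mathcal{A}$; $\mathrm{Att}(A)=\{B:(B,A)\in\mathrm{Att}\}$, $\mathrm{Sup}(A)=\{B:(B,A)\in\mathrm{Sup}\}$. A labelling is a map $L:\mathcal{A}\to\{\mathrm{in},\mathrm{out},\mathrm{und}\}$. The attackers of $A$ dominate its supporters if $|\{B\in\mathrm{Att}(A):L(B)=\mathrm{in}\}|>|\{B\in\mathrm{Sup}(A):L(B)\ne\mathrm{out}\}|$;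 the supporters dominate the attackers if $|\{B\in\mathrm{Sup}(A):L(B)=\mathrm{in}\}|>|\{B\in\mathrm{Att}(A):L(B)\ne\mathrm{out}\}|$. $L$ is bi-complete if for every $A$: $L(A)=\mathrm{in}$ iff ($L(B)=\mathrm{out}$ for all $B\in\mathrm{Att}(A)$ or $A$'s supporters dominate its attackers), and $L(A)=\mathrm{out}$ iff $A$'s attackers dominate its supporters. The explanation BAG $\mathcal{B}_F$ has arguments: a class argument $A_y$ for each $y\in\mathcal{C}$; a rule argument $A_{T,r}$ for each $T\in F$, $r\in T$; a feature argument $A_{X_i\in S_{i,j}}$ for each feature $i$ and partition set $S_{i,j}$. Attacks: between any two distinct feature arguments of the same feature; from $A_{X_i\in S_{i,j}}$ to $A_{T,r}$ whenever some literal in $\mathrm{prem}(r)$ is satisfied by no value in $S_{i,j}$; from $A_{T,r}$ to $A_y$ whenever $\mathrm{conc}(r)\ne y$. Supports: from $A_{T,r}$ to $A_y$ whenever $\mathrm{conc}(r)=y$. No other attacks or supports. *)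

theory Defs
  imports Main
begin

datatype lab = In | Out | Und

text \<open>A BAG is a triple (arguments, attack relation, support relation).\<close>
type_synonym 'a bag = "'a set \<times> ('a \<times> 'a) set \<times> ('a \<times> 'a) set"

definition rel_of :: "('a \<times> 'a) set \<Rightarrow> 'a \<Rightarrow> 'a set" where
  "rel_of R A = {B. (B, A) \<in> R}"

definition att_dom :: "('a \<times> 'a) set \<Rightarrow> ('a \<times> 'a) set \<Rightarrow> ('a \<Rightarrow> lab) \<Rightarrow> 'a \<Rightarrow> bool" where
  "att_dom At Sp L A \<longleftrightarrow>
     card {B \<in> rel_of At A. L B = In} > card {B \<in> rel_of Sp A. L B \<noteq> Out}"

definition sup_dom :: "('a \<times> 'a) set \<Rightarrow> ('a \<times> 'a) set \<Rightarrow> ('a \<Rightarrow> lab) \<Rightarrow> 'a \<Rightarrow> bool" where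
  "sup_dom At Sp L A \<longleftrightarrow>
     card {B \<in> rel_of Sp A. L B = In} > card {B \<in> rel_of At A. L B \<noteq> Out}"

definition bi_complete :: "'a bag \<Rightarrow> ('a \<Rightarrow> lab) \<Rightarrow> bool" where
  "bi_complete G L \<longleftrightarrow> (case G of (Args, At, Sp) \<Rightarrow>
     (\<forall>A \<in> Args.
        (L A = In \<longleftrightarrow> ((\<forall>B \<in> rel_of At A. L B = Out) \<or> sup_dom At Sp L A)) \<and>
        (L A = Out \<longleftrightarrow> att_dom At Sp L A)))"

text \<open>Feature values live in a common
  linearly ordered type \<open>'v\<close> (e.g. real). \<open>numf i\<close> says feature i is numerical,
  otherwise it is categorical; \<open>D i\<close> is its domain.\<close>

datatype 'v cond = CEq nat 'v | CLe nat 'v   \<comment> \<open>\<open>X_i = v\<close> and \<open>X_i \<le> v\<close>\<close>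

datatype 'v lit = Pos "'v cond" | Neg "'v cond"

fun cond_feat :: "'v cond \<Rightarrow> nat" where
  "cond_feat (CEq i _) = i" | "cond_feat (CLe i _) = i"

fun cond_holds :: "'v::linorder cond \<Rightarrow> 'v \<Rightarrow> bool" where
  "cond_holds (CEq _ w) v \<longleftrightarrow> v = w" | "cond_holds (CLe _ w) v \<longleftrightarrow> v \<le> w"

fun lit_cond :: "'v lit \<Rightarrow> 'v cond" where
  "lit_cond (Pos c) = c" | "lit_cond (Neg c) = c"

definition lit_feat :: "'v lit \<Rightarrow> nat" where
  "lit_feat l = cond_feat (lit_cond l)"

fun lit_holds :: "'v::linorder lit \<Rightarrow> 'v \<Rightarrow> bool" where
  "lit_holds (Pos c) v \<longleftrightarrow> cond_holds c v" | "lit_holds (Neg c) v \<longleftrightarrow> \<not> cond_holds c v"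

definition wf_lit :: "nat \<Rightarrow> (nat \<Rightarrow> bool) \<Rightarrow> 'v lit \<Rightarrow> bool" where
  "wf_lit k numf l \<longleftrightarrow> lit_feat l < k \<and>
     (case lit_cond l of CEq i _ \<Rightarrow> \<not> numf i | CLe i _ \<Rightarrow> numf i)"

definition input_dom :: "nat \<Rightarrow> (nat \<Rightarrow> 'v set) \<Rightarrow> (nat \<Rightarrow> 'v) \<Rightarrow> bool" where
  "input_dom k D x \<longleftrightarrow> (\<forall>i<k. x i \<in> D i)"

definition sat_lit :: "(nat \<Rightarrow> 'v::linorder) \<Rightarrow> 'v lit \<Rightarrow> bool" where
  "sat_lit x l \<longleftrightarrow> lit_holds l (x (lit_feat l))"

type_synonym ('v, 'c) rule = "'v lit set \<times> 'c"

definition prem :: "('v, 'c) rule \<Rightarrow> 'v lit set" where "prem r = fst r"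
definition conc :: "('v, 'c) rule \<Rightarrow> 'c" where "conc r = snd r"

definition sat_prem :: "(nat \<Rightarrow> 'v::linorder) \<Rightarrow> ('v, 'c) rule \<Rightarrow> bool" where
  "sat_prem x r \<longleftrightarrow> (\<forall>l \<in> prem r. sat_lit x l)"

type_synonym ('v, 'c) tree = "('v, 'c) rule set"

definition is_tree :: "nat \<Rightarrow> (nat \<Rightarrow> 'v set) \<Rightarrow> ('v::linorder, 'c) tree \<Rightarrow> bool" where
  "is_tree k D T \<longleftrightarrow> finite T \<and> (\<forall>r \<in> T. finite (prem r)) \<and>
     (\<forall>x. input_dom k D x \<longrightarrow> (\<exists>!r. r \<in> T \<and> sat_prem x r))"

definition active_rule :: "('v::linorder, 'c) tree \<Rightarrow> (nat \<Rightarrow> 'v) \<Rightarrow> ('v, 'c) rule \<Rightarrow> bool" where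
  "active_rule T x r \<longleftrightarrow> r \<in> T \<and> sat_prem x r"

definition thresholds :: "('v, 'c) tree set \<Rightarrow> nat \<Rightarrow> 'v set" where
  "thresholds F i = {v. \<exists>T \<in> F. \<exists>r \<in> T. \<exists>l \<in> prem r. lit_cond l = CLe i v}"

definition part_count :: "(nat \<Rightarrow> bool) \<Rightarrow> (nat \<Rightarrow> 'v::linorder set) \<Rightarrow> ('v, 'c) tree set \<Rightarrow> nat \<Rightarrow> nat" where
  "part_count numf D F i =
     (if numf i then length (sorted_list_of_set (thresholds F i)) + 1 else card (D i))"

text \<open>Partition set \<open>S_{i,j}\<close>, indexed from \<open>j = 0\<close> to \<open>n_i - 1\<close>.
  Numerical: with sorted thresholds \<open>ts\<close> of length m, the sets
  \<open>D_i \<inter> (-\<infinity>, ts!0]\<close>, \<open>D_i \<inter> (ts!(j-1), ts!j]\<close>, \<open>D_i \<inter> (ts!(m-1), \<infinity>)\<close>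
  (just \<open>D_i\<close> if m = 0). Categorical: the singletons of the values of \<open>D_i\<close>.\<close>
definition part_set :: "(nat \<Rightarrow> bool) \<Rightarrow> (nat \<Rightarrow> 'v::linorder set) \<Rightarrow> ('v, 'c) tree set \<Rightarrow> nat \<Rightarrow> nat \<Rightarrow> 'v set" where
  "part_set numf D F i j =
     (if numf i then
        (let ts = sorted_list_of_set (thresholds F i); m = length ts in
          {v \<in> D i. (j = 0 \<or> ts ! (j - 1) < v) \<and> (j = m \<or> v \<le> ts ! j)})
      else {sorted_list_of_set (D i) ! j})"

datatype ('v, 'c) arg =
    AClass 'c
  | ARule "('v, 'c) tree" "('v, 'c) rule"
  | AFeat nat nat   \<comment> \<open>\<open>AFeat i j\<close> is the argument \<open>X_i \<in> S_{i,j}\<close>\<close>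

definition expl_args :: "nat \<Rightarrow> (nat \<Rightarrow> bool) \<Rightarrow> (nat \<Rightarrow> 'v::linorder set) \<Rightarrow> 'c set \<Rightarrow> ('v, 'c) tree set \<Rightarrow> ('v, 'c) arg set" where
  "expl_args k numf D C F =
     {AClass y | y. y \<in> C} \<union>
     {ARule T r | T r. T \<in> F \<and> r \<in> T} \<union>
     {AFeat i j | i j. i < k \<and> j < part_count numf D F i}"

definition expl_att :: "nat \<Rightarrow> (nat \<Rightarrow> bool) \<Rightarrow> (nat \<Rightarrow> 'v::linorder set) \<Rightarrow> 'c set \<Rightarrow> ('v, 'c) tree set \<Rightarrow> (('v, 'c) arg \<times> ('v, 'c) arg) set" where
  "expl_att k numf D C F =
     {(AFeat i j, AFeat i j') | i j j'. i < k \<and> j < part_count numf D F i \<and>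
         j' < part_count numf D F i \<and> j \<noteq> j'} \<union>
     {(AFeat i j, ARule T r) | i j T r. i < k \<and> j < part_count numf D F i \<and> T \<in> F \<and> r \<in> T \<and>
         (\<exists>l \<in> prem r. lit_feat l = i \<and> (\<forall>v \<in> part_set numf D F i j. \<not> lit_holds l v))} \<union>
     {(ARule T r, AClass y) | T r y. T \<in> F \<and> r \<in> T \<and> y \<in> C \<and> conc r \<noteq> y}"

definition expl_sup :: "'c set \<Rightarrow> ('v, 'c) tree set \<Rightarrow> (('v, 'c) arg \<times> ('v, 'c) arg) set" where
  "expl_sup C F = {(ARule T r, AClass y) | T r y. T \<in> F \<and> r \<in> T \<and> y \<in> C \<and> conc r = y}"

definition expl_bag :: "nat \<Rightarrow> (nat \<Rightarrow> bool) \<Rightarrow> (nat \<Rightarrow> 'v::linorder set) \<Rightarrow> 'c set \<Rightarrow> ('v, 'c) tree set \<Rightarrow> ('v, 'c) arg bag" where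
  "expl_bag k numf D C F = (expl_args k numf D C F, expl_att k numf D C F, expl_sup C F)"

definition lab_base :: "(nat \<Rightarrow> bool) \<Rightarrow> (nat \<Rightarrow> 'v::linorder set) \<Rightarrow> ('v, 'c) tree set \<Rightarrow> (nat \<Rightarrow> 'v) \<Rightarrow> ('v, 'c) arg \<Rightarrow> lab" where
  "lab_base numf D F x A = (case A of
       AFeat i j \<Rightarrow> (if x i \<in> part_set numf D F i j then In else Out)
     | ARule T r \<Rightarrow> (if active_rule T x r then In else Out)
     | AClass y \<Rightarrow> Und)"

text \<open>Class arguments are only attacked/supported by rule arguments, so their
  dominance is evaluated w.r.t. the labels of the rule arguments.\<close>
definition expl_lab :: "nat \<Rightarrow> (nat \<Rightarrow> bool) \<Rightarrow> (nat \<Rightarrow> 'v::linorder set) \<Rightarrow> 'c set \<Rightarrow> ('v, 'c) tree set \<Rightarrow> (nat \<Rightarrow> 'v) \<Rightarrow> ('v, 'c) arg \<Rightarrow> lab" where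
  "expl_lab k numf D C F x A = (case A of
       AClass y \<Rightarrow>
         (if sup_dom (expl_att k numf D C F) (expl_sup C F) (lab_base numf D F x) A then In
          else if att_dom (expl_att k numf D C F) (expl_sup C F) (lab_base numf D F x) A then Out
          else Und)
     | _ \<Rightarrow> lab_base numf D F x A)"

end

theory Submission imports Defs begin

definition seg :: "'v::linorder list \<Rightarrow> nat \<Rightarrow> 'v \<Rightarrow> bool" where
  "seg ts j v \<longleftrightarrow> (j = 0 \<or> ts ! (j - 1) < v) \<and> (j = length ts \<or> v \<le> ts ! j)"

lemma seg_ex: "\<exists>j \<le> length ts. seg ts j v"
proof -
  define j where "j = (LEAST j. j = length ts \<or> v \<le> ts ! j)"
  have P: "j = length ts \<or> v \<le> ts ! j" unfolding j_def by (rule LeastI[of _ "length ts"]) simp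
  have le: "j \<le> length ts" unfolding j_def by (rule Least_le) simp
  have "j = 0 \<or> ts ! (j - 1) < v"
  proof (cases "j = 0")
    case False
    have "j - 1 < j" using False by simp
    then have "\<not> (j - 1 = length ts \<or> v \<le> ts ! (j - 1))" unfolding j_def by (rule not_less_Least)
    then show ?thesis by auto
  qed simp
  then show ?thesis using P le unfolding seg_def by blast
qed

lemma seg_uniq:
  assumes "sorted ts" "seg ts j v" "seg ts j' v" "j \<le> length ts" "j' \<le> length ts"
  shows "j = j'"
proof (rule ccontr)
  assume "j \<noteq> j'"
  then consider "j < j'" | "j' < j" by linarith
  then show False
  proof cases
    case 1
    then have "v \<le> ts ! j" "ts ! (j' - 1) < v" using assms unfolding seg_def by auto
    moreover have "ts ! j \<le> ts ! (j' - 1)" using 1 assms by (intro sorted_nth_mono) auto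
    ultimately show False by simp
  next
    case 2
    then have "v \<le> ts ! j'" "ts ! (j - 1) < v" using assms unfolding seg_def by auto
    moreover have "ts ! j' \<le> ts ! (j - 1)" using 2 assms by (intro sorted_nth_mono) auto
    ultimately show False by simp
  qed
qed

lemma seg_side:
  assumes "sorted ts" "seg ts j a" "seg ts j b" "t \<in> set ts" "j \<le> length ts"
  shows "(a \<le> t) = (b \<le> t)"
proof -
  obtain p where p: "p < length ts" "t = ts ! p" using assms(4) by (auto simp: in_set_conv_nth)
  show ?thesis
  proof (cases "p < j")
    case True
    then have "ts ! p \<le> ts ! (j - 1)" using assms p by (intro sorted_nth_mono) auto
    moreover have "ts ! (j - 1) < a" "ts ! (j - 1) < b" using assms True unfolding seg_def by auto
    ultimately show ?thesis using p by auto
  next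
    case False
    then have "ts ! j \<le> ts ! p" using assms p by (intro sorted_nth_mono) auto
    moreover have "a \<le> ts ! j" "b \<le> ts ! j" using assms False p unfolding seg_def by auto
    ultimately show ?thesis using p by auto
  qed
qed

lemma thresholds_finite:
  assumes "finite F" "\<forall>T \<in> F. finite T \<and> (\<forall>r \<in> T. finite (prem r))"
  shows "finite (thresholds F i)"
proof -
  let ?f = "\<lambda>l. case lit_cond l of CLe _ v \<Rightarrow> v | CEq _ v \<Rightarrow> v"
  have "thresholds F i \<subseteq> ?f ` (\<Union>T\<in>F. \<Union>r\<in>T. prem r)"
    unfolding thresholds_def by (force)
  moreover have "finite (\<Union>T\<in>F. \<Union>r\<in>T. prem r)" using assms by auto
  ultimately show ?thesis using finite_subset by blast
qed

lemma part_set_num: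
  "numf i \<Longrightarrow> part_set numf D F i j = {v \<in> D i. seg (sorted_list_of_set (thresholds F i)) j v}"
  unfolding part_set_def seg_def Let_def by simp

lemma feat_unique:
  assumes "\<not> numf i \<longrightarrow> finite (D i)" "finite (thresholds F i)" "xi \<in> D i"
  shows "\<exists>!j. j < part_count numf D F i \<and> xi \<in> part_set numf D F i j"
proof (cases "numf i")
  case True
  let ?ts = "sorted_list_of_set (thresholds F i)"
  obtain j where j: "j \<le> length ?ts" "seg ?ts j xi" using seg_ex by blast
  show ?thesis
  proof (rule ex1I[of _ j])
    show "j < part_count numf D F i \<and> xi \<in> part_set numf D F i j"
      using True j assms by (auto simp: part_count_def part_set_num)
  next
    fix j' assume "j' < part_count numf D F i \<and> xi \<in> part_set numf D F i j'"
    then show "j' = j" using True j assms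
      by (intro seg_uniq[of ?ts j' xi j]) (auto simp: part_count_def part_set_num)
  qed
next
  case False
  let ?ds = "sorted_list_of_set (D i)"
  have "distinct ?ds" "xi \<in> set ?ds" using False assms by auto
  from distinct_Ex1[OF this] show ?thesis using False assms
    by (simp add: part_count_def part_set_def eq_commute[of xi])
qed


lemma lit_same_part:
  assumes wf: "wf_lit k numf l" and fi: "lit_feat l = i"
    and th: "\<And>w. lit_cond l = CLe i w \<Longrightarrow> w \<in> thresholds F i"
    and fin: "finite (thresholds F i)"
    and a: "a \<in> part_set numf D F i j" and b: "b \<in> part_set numf D F i j"
    and j: "j < part_count numf D F i"
  shows "lit_holds l a = lit_holds l b"
proof (cases "lit_cond l")
  case (CEq i' w)
  then have "i' = i" "\<not> numf i" using wf fi by (auto simp: wf_lit_def lit_feat_def)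
  then have "a = b" using a b by (simp add: part_set_def)
  then show ?thesis by simp
next
  case (CLe i' w)
  then have ii: "i' = i" "numf i" using wf fi by (auto simp: wf_lit_def lit_feat_def)
  let ?ts = "sorted_list_of_set (thresholds F i)"
  have "w \<in> set ?ts" using th CLe ii fin by auto
  moreover have "seg ?ts j a" "seg ?ts j b" using a b ii by (auto simp: part_set_num)
  moreover have "j \<le> length ?ts" using j ii by (simp add: part_count_def)
  ultimately have "(a \<le> w) = (b \<le> w)" by (intro seg_side) auto
  then show ?thesis using CLe by (cases l) auto
qed

theorem lemma3:
  fixes k :: nat and numf :: "nat \<Rightarrow> bool" and D :: "nat \<Rightarrow> 'v::linorder set"
    and C :: "'c set" and F :: "('v, 'c) tree set"
  assumes cat_finite: "\<forall>i<k. \<not> numf i \<longrightarrow> finite (D i)"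
    and C_finite: "finite C"
    and F_finite: "finite F"
    and F_nonempty: "F \<noteq> {}"
    and trees: "\<forall>T \<in> F. is_tree k D T"
    and rules_wf: "\<forall>T \<in> F. \<forall>r \<in> T. conc r \<in> C \<and> (\<forall>l \<in> prem r. wf_lit k numf l)"
  shows "\<forall>x. input_dom k D x \<longrightarrow>
           bi_complete (expl_bag k numf D C F) (expl_lab k numf D C F x) \<and>
           (\<forall>y \<in> C. \<forall>y' \<in> C. expl_lab k numf D C F x (AClass y) = In \<longrightarrow>
                 expl_lab k numf D C F x (AClass y') = In \<longrightarrow> y = y') \<and>
           (\<forall>y \<in> C. expl_lab k numf D C F x (AClass y) = In \<longrightarrow>
                 (\<forall>y' \<in> C - {y}. expl_lab k numf D C F x (AClass y') = Out))"
proof (intro allI impI)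
  fix x assume x: "input_dom k D x"
  let ?att = "expl_att k numf D C F"
  let ?sup = "expl_sup C F"
  let ?L = "expl_lab k numf D C F x"
  let ?Lb = "lab_base numf D F x"
  let ?n = "part_count numf D F"
  let ?S = "part_set numf D F"
  have Tfin: "\<forall>T \<in> F. finite T \<and> (\<forall>r \<in> T. finite (prem r))" using trees by (auto simp: is_tree_def)
  have thfin: "\<And>i. finite (thresholds F i)" using thresholds_finite[OF F_finite Tfin] .
  have xD: "\<And>i. i < k \<Longrightarrow> x i \<in> D i" using x by (simp add: input_dom_def)
  have uniq: "\<And>i. i < k \<Longrightarrow> \<exists>!j. j < ?n i \<and> x i \<in> ?S i j"
    using cat_finite thfin xD by (intro feat_unique) auto
  have Lrule: "\<And>T r. ?L (ARule T r) = (if active_rule T x r then In else Out)"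
    by (simp add: expl_lab_def lab_base_def)
  have Lfeat: "\<And>i j. ?L (AFeat i j) = (if x i \<in> ?S i j then In else Out)"
    by (simp add: expl_lab_def lab_base_def)
  have LbR: "\<And>T r. ?Lb (ARule T r) = (if active_rule T x r then In else Out)"
    by (simp add: lab_base_def)
  define R where "R = {ARule T r | T r. T \<in> F \<and> r \<in> T}"
  have Rfin: "finite R"
  proof -
    have "R = (\<Union>T\<in>F. ARule T ` T)" unfolding R_def by auto
    then show ?thesis using F_finite Tfin by auto
  qed
  define Sy where "Sy y = {ARule T r | T r. T \<in> F \<and> r \<in> T \<and> conc r = y \<and> active_rule T x r}" for y
  define Ay where "Ay y = {ARule T r | T r. T \<in> F \<and> r \<in> T \<and> conc r \<noteq> y \<and> active_rule T x r}" for y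
  have Syfin: "finite (Sy y)" for y by (rule finite_subset[OF _ Rfin]) (auto simp: Sy_def R_def)
  have Ayfin: "finite (Ay y)" for y by (rule finite_subset[OF _ Rfin]) (auto simp: Ay_def R_def)
  have att_class: "rel_of ?att (AClass y) = {ARule T r | T r. T \<in> F \<and> r \<in> T \<and> conc r \<noteq> y}"
    if "y \<in> C" for y using that unfolding rel_of_def expl_att_def by blast
  have sup_class: "rel_of ?sup (AClass y) = {ARule T r | T r. T \<in> F \<and> r \<in> T \<and> conc r = y}"
    if "y \<in> C" for y using that by (auto simp: rel_of_def expl_sup_def)
  have sets_eq:
    "{B \<in> rel_of ?att (AClass y). M B = In} = Ay y"
    "{B \<in> rel_of ?att (AClass y). M B \<noteq> Out} = Ay y"
    "{B \<in> rel_of ?sup (AClass y). M B = In} = Sy y"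
    "{B \<in> rel_of ?sup (AClass y). M B \<noteq> Out} = Sy y"
    if "y \<in> C" "M = ?L \<or> M = ?Lb" for y M
  proof -
    have M: "M (ARule T r) = (if active_rule T x r then In else Out)" for T r
      using that(2) by (elim disjE) (simp_all only: Lrule LbR)
    show "{B \<in> rel_of ?att (AClass y). M B = In} = Ay y"
      "{B \<in> rel_of ?att (AClass y). M B \<noteq> Out} = Ay y"
      "{B \<in> rel_of ?sup (AClass y). M B = In} = Sy y"
      "{B \<in> rel_of ?sup (AClass y). M B \<noteq> Out} = Sy y"
      by (auto simp: att_class[OF that(1)] sup_class[OF that(1)] Ay_def Sy_def M split: if_splits)
  qed
  have supd: "sup_dom ?att ?sup M (AClass y) \<longleftrightarrow> card (Ay y) < card (Sy y)"
    if "y \<in> C" "M = ?L \<or> M = ?Lb" for y M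
    using sets_eq[OF that] by (simp add: sup_dom_def)
  have attd: "att_dom ?att ?sup M (AClass y) \<longleftrightarrow> card (Sy y) < card (Ay y)"
    if "y \<in> C" "M = ?L \<or> M = ?Lb" for y M
    using sets_eq[OF that] by (simp add: att_dom_def)
  have Lclass: "?L (AClass y) = (if card (Ay y) < card (Sy y) then In
      else if card (Sy y) < card (Ay y) then Out else Und)" if "y \<in> C" for y
    using supd[OF that] attd[OF that] by (simp add: expl_lab_def)
  have cross: "Sy y' \<subseteq> Ay y" if "y \<noteq> y'" for y y'
    using that by (auto simp: Sy_def Ay_def)
  have cross_card: "card (Sy y') \<le> card (Ay y)" if "y \<noteq> y'" for y y'
    using card_mono[OF Ayfin cross[OF that]] .
  have P2: "\<forall>y \<in> C. \<forall>y' \<in> C. ?L (AClass y) = In \<longrightarrow> ?L (AClass y') = In \<longrightarrow> y = y'"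
  proof (intro ballI impI)
    fix y y' assume yy: "y \<in> C" "y' \<in> C" "?L (AClass y) = In" "?L (AClass y') = In"
    show "y = y'"
    proof (rule ccontr)
      assume ne: "y \<noteq> y'"
      have "card (Ay y) < card (Sy y)" "card (Ay y') < card (Sy y')"
        using yy Lclass by (auto split: if_splits)
      moreover have "card (Sy y') \<le> card (Ay y)" "card (Sy y) \<le> card (Ay y')"
        using cross_card ne by auto
      ultimately show False by simp
    qed
  qed
  have P3: "\<forall>y \<in> C. ?L (AClass y) = In \<longrightarrow> (\<forall>y' \<in> C - {y}. ?L (AClass y') = Out)"
  proof (intro ballI impI)
    fix y y' assume yy: "y \<in> C" "?L (AClass y) = In" "y' \<in> C - {y}"
    have "card (Ay y) < card (Sy y)" using yy Lclass by (auto split: if_splits)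
    moreover have "card (Sy y') \<le> card (Ay y)" "card (Sy y) \<le> card (Ay y')"
      using cross_card yy by auto
    ultimately show "?L (AClass y') = Out" using Lclass yy by auto
  qed
  have P1: "bi_complete (expl_bag k numf D C F) ?L"
    unfolding bi_complete_def expl_bag_def
  proof (simp only: prod.case, intro ballI conjI)
    fix A assume A: "A \<in> expl_args k numf D C F"
    then consider (cl) y where "A = AClass y" "y \<in> C"
      | (ru) T r where "A = ARule T r" "T \<in> F" "r \<in> T"
      | (fe) i j where "A = AFeat i j" "i < k" "j < ?n i"
      by (auto simp: expl_args_def)
    then have "(?L A = In \<longleftrightarrow> ((\<forall>B \<in> rel_of ?att A. ?L B = Out) \<or> sup_dom ?att ?sup ?L A)) \<and>
        (?L A = Out \<longleftrightarrow> att_dom ?att ?sup ?L A)"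
    proof cases
      case cl
      have key: "(\<forall>B \<in> rel_of ?att A. ?L B = Out) \<Longrightarrow> card (Ay y) < card (Sy y)"
      proof -
        assume allout: "\<forall>B \<in> rel_of ?att A. ?L B = Out"
        have "Ay y = {}"
        proof -
          have "Ay y \<subseteq> {B \<in> rel_of ?att (AClass y). ?L B = In}"
            using sets_eq(1)[OF cl(2), of ?L] by simp
          then show ?thesis using allout cl by auto
        qed
        moreover have "Sy y \<noteq> {}"
        proof -
          obtain T where T: "T \<in> F" using F_nonempty by blast
          have "\<exists>!r. r \<in> T \<and> sat_prem x r" using trees x T by (simp add: is_tree_def)
          then obtain r where r: "r \<in> T" "sat_prem x r" by blast
          have act: "active_rule T x r" using r by (simp add: active_rule_def)
          have "conc r = y"
          proof (rule ccontr)
            assume "conc r \<noteq> y"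
            then have "ARule T r \<in> Ay y" using T r act unfolding Ay_def by blast
            with \<open>Ay y = {}\<close> show False by simp
          qed
          then have "ARule T r \<in> Sy y" using T r act unfolding Sy_def by blast
          then show ?thesis by blast
        qed
        ultimately show ?thesis using Syfin by (simp add: card_gt_0_iff)
      qed
      show ?thesis using cl key Lclass[OF cl(2)] supd[OF cl(2), of ?L] attd[OF cl(2), of ?L]
        by auto
    next
      case ru
      have attR: "rel_of ?att A = {AFeat i j | i j. i < k \<and> j < ?n i \<and>
          (\<exists>l \<in> prem r. lit_feat l = i \<and> (\<forall>v \<in> ?S i j. \<not> lit_holds l v))}"
        using ru(2,3) unfolding ru(1) rel_of_def expl_att_def by blast
      have supR: "rel_of ?sup A = {}" using ru by (auto simp: rel_of_def expl_sup_def)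
      have finA: "finite (rel_of ?att A)"
      proof -
        have "rel_of ?att A \<subseteq> (\<lambda>(i, j). AFeat i j) ` (SIGMA i:{..<k}. {..<?n i})"
          unfolding attR by auto
        then show ?thesis by (rule finite_subset) auto
      qed
      have nsd: "\<not> sup_dom ?att ?sup ?L A" using supR by (simp add: sup_dom_def)
      have ad: "att_dom ?att ?sup ?L A \<longleftrightarrow> (\<exists>B \<in> rel_of ?att A. ?L B = In)"
        using supR finA by (auto simp: att_dom_def card_gt_0_iff)
      have LB: "\<forall>B \<in> rel_of ?att A. ?L B = In \<or> ?L B = Out"
        unfolding attR by (auto simp: Lfeat split: if_splits)
      have main: "active_rule T x r \<longleftrightarrow> \<not> (\<exists>B \<in> rel_of ?att A. ?L B = In)"
      proof
        assume act: "active_rule T x r"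
        show "\<not> (\<exists>B \<in> rel_of ?att A. ?L B = In)"
        proof
          assume "\<exists>B \<in> rel_of ?att A. ?L B = In"
          then obtain i j l where "x i \<in> ?S i j" "l \<in> prem r" "lit_feat l = i"
              "\<forall>v \<in> ?S i j. \<not> lit_holds l v"
            unfolding attR by (auto simp: Lfeat split: if_splits)
          moreover have "lit_holds l (x (lit_feat l))" using act \<open>l \<in> prem r\<close>
            by (simp add: active_rule_def sat_prem_def sat_lit_def)
          ultimately show False by auto
        qed
      next
        assume noin: "\<not> (\<exists>B \<in> rel_of ?att A. ?L B = In)"
        show "active_rule T x r"
        proof (rule ccontr)
          assume "\<not> active_rule T x r"
          then obtain l where l: "l \<in> prem r" "\<not> lit_holds l (x (lit_feat l))"
            using ru by (auto simp: active_rule_def sat_prem_def sat_lit_def)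
          define i where "i = lit_feat l"
          have wf: "wf_lit k numf l" using rules_wf ru l by auto
          then have ik: "i < k" by (simp add: wf_lit_def i_def)
          obtain j where j: "j < ?n i" "x i \<in> ?S i j" using uniq[OF ik] by blast
          have th: "\<And>w. lit_cond l = CLe i w \<Longrightarrow> w \<in> thresholds F i"
            using ru l unfolding thresholds_def by blast
          have "\<forall>v \<in> ?S i j. \<not> lit_holds l v"
          proof
            fix v assume "v \<in> ?S i j"
            then have "lit_holds l v = lit_holds l (x i)"
              using lit_same_part[OF wf i_def[symmetric] th thfin _ _ j(1)] j(2) by blast
            then show "\<not> lit_holds l v" using l i_def by simp
          qed
          then have "AFeat i j \<in> rel_of ?att A" unfolding attR using ik j l i_def by blast
          moreover have "?L (AFeat i j) = In" using j by (simp add: Lfeat)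
          ultimately show False using noin by blast
        qed
      qed
      have LA: "?L A = (if active_rule T x r then In else Out)" by (simp only: ru(1) Lrule)
      have allout: "(\<forall>B \<in> rel_of ?att A. ?L B = Out) \<longleftrightarrow> \<not> (\<exists>B \<in> rel_of ?att A. ?L B = In)"
        using LB by fastforce
      show ?thesis unfolding LA allout using main ad nsd by (cases "active_rule T x r") simp_all
    next
      case fe
      have attF: "rel_of ?att A = {AFeat i j' | j'. j' < ?n i \<and> j' \<noteq> j}"
        using fe(2,3) unfolding fe(1) rel_of_def expl_att_def by blast
      have supF: "rel_of ?sup A = {}" using fe by (auto simp: rel_of_def expl_sup_def)
      have finA: "finite (rel_of ?att A)"
        unfolding attF by (rule finite_subset[of _ "AFeat i ` {..<?n i}"]) auto
      have nsd: "\<not> sup_dom ?att ?sup ?L A" using supF by (simp add: sup_dom_def)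
      have ad: "att_dom ?att ?sup ?L A \<longleftrightarrow> (\<exists>B \<in> rel_of ?att A. ?L B = In)"
        using supF finA by (auto simp: att_dom_def card_gt_0_iff)
      obtain j0 where j0: "j0 < ?n i" "x i \<in> ?S i j0"
        and u: "\<And>j'. j' < ?n i \<Longrightarrow> x i \<in> ?S i j' \<Longrightarrow> j' = j0"
        using uniq[OF fe(2)] by blast
      have main: "x i \<in> ?S i j \<longleftrightarrow> \<not> (\<exists>B \<in> rel_of ?att A. ?L B = In)"
      proof
        assume xin: "x i \<in> ?S i j"
        show "\<not> (\<exists>B \<in> rel_of ?att A. ?L B = In)"
        proof
          assume "\<exists>B \<in> rel_of ?att A. ?L B = In"
          then obtain j' where "j' < ?n i" "j' \<noteq> j" "?L (AFeat i j') = In"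
            unfolding attF by blast
          then have "x i \<in> ?S i j'" "j' < ?n i" "j' \<noteq> j" by (auto simp: Lfeat split: if_splits)
          then show False using u xin fe(3) by metis
        qed
      next
        assume noin: "\<not> (\<exists>B \<in> rel_of ?att A. ?L B = In)"
        show "x i \<in> ?S i j"
        proof (cases "j0 = j")
          case True then show ?thesis using j0 by simp
        next
          case False
          then have "AFeat i j0 \<in> rel_of ?att A" unfolding attF using j0 by blast
          moreover have "?L (AFeat i j0) = In" using j0 by (simp add: Lfeat)
          ultimately show ?thesis using noin by blast
        qed
      qed
      have LB: "\<forall>B \<in> rel_of ?att A. ?L B = In \<or> ?L B = Out"
        unfolding attF by (auto simp: Lfeat split: if_splits)
      have LA: "?L A = (if x i \<in> ?S i j then In else Out)" by (simp add: fe(1) Lfeat)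
      have allout: "(\<forall>B \<in> rel_of ?att A. ?L B = Out) \<longleftrightarrow> \<not> (\<exists>B \<in> rel_of ?att A. ?L B = In)"
        using LB by fastforce
      show ?thesis unfolding LA allout using main ad nsd by (cases "x i \<in> ?S i j") simp_all
    qed
    then show "(?L A = In \<longleftrightarrow> ((\<forall>B \<in> rel_of ?att A. ?L B = Out) \<or> sup_dom ?att ?sup ?L A))"
      "(?L A = Out \<longleftrightarrow> att_dom ?att ?sup ?L A)" by blast+
  qed
  show "bi_complete (expl_bag k numf D C F) ?L \<and>
           (\<forall>y \<in> C. \<forall>y' \<in> C. ?L (AClass y) = In \<longrightarrow> ?L (AClass y') = In \<longrightarrow> y = y') \<and>
           (\<forall>y \<in> C. ?L (AClass y) = In \<longrightarrow> (\<forall>y' \<in> C - {y}. ?L (AClass y') = Out))"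
    using P1 P2 P3 by blast
qed

end
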